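(* Let $\mathbb{H}$ be a finite-dimensional complex Hilbert space with $\dim\mathbb{H}\ge2$, let $n\ge2$ and $k\ge1$ be integers, let $|X\rangle\in\mathbb{H}^{\otimes(nk-1)}$ be a known unit vector, let $\tau_1,\dots,\tau_n\in\mathbb{P}_{nk-1}$, let $c_1,\dots,c_n>0$, and let $|\mu\rangle=\sum_{j=1}^n\alpha_j|j\rangle\in\mathbb{C}^n$ be a unit vector. For unit vectors $|\psi_1\rangle,\dots,|\psi_n\rangle\in\mathbb{H}$ and $j=1,\dots,n$ put $|\Psi^j\rangle=\bigotimes_{t=1}^n|\psi_t\rangle^{\otimes k_{jt}}\in\mathbb{H}^{\otimes(nk-1)}$, where $k_{jt}=k$ for $t\ne j$ and $k_{jj}=k-1$. Then there exists a probabilistic quantum transformation $\mathcal{F}_{\tau_1,\dots,\tau_n}$ from $\mathbb{C}^n\otimes\mathbb{H}^{\otimes nk}$ to $\mathbb{H}$, independent of $\mu$ and the $\psi_t$, such that for all unit vectors $|\psi_1\rangle,\dots,|\psi_n\rangle$ with $|\langle X|S_{\tau_j}|\Psi^j\rangle|^2=c_j$ for $j=1,\dots,n$, one has $$\mathcal{F}_{\tau_1,\dots,\tau_n}\Big(\rho_\mu\otimes\bigotimes_{i=1}^n\rho_{\psi_i}^{\otimes k}\Big)=\rho_\varphi,\qquad|\varphi\rangle\propto\sum_{j=1}^n\alpha_je^{i\theta_j}|\psi_j\rangle,\quad e^{i\theta_j}=\frac{\langle X|S_{\tau_j}|\Psi^j\rangle}{|\langle X|S_{\tau_j}|\Psi^j\rangle|}$$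 (the superposition assumed nonzero).
   Context: $\mathbb{P}_{nk-1}$ is the symmetric group on $\{1,\dots,nk-1\}$; for $g\in\mathbb{P}_{nk-1}$, $S_g$ is the unitary on $\mathbb{H}^{\otimes(nk-1)}$ permuting tensor factors according to $g$. For a unit vector $|\psi\rangle$, $\rho_\psi=|\psi\rangle\langle\psi|$; $|\varphi\rangle\propto|\chi\rangle$ means $|\varphi\rangle$ is the normalization of $|\chi\rangle$ up to a global phase. A probabilistic quantum transformation from $\mathbb{H}_1$ to $\mathbb{H}_2$ is a completely positive, trace-non-increasing linear map from operators on $\mathbb{H}_1$ to operators on $\mathbb{H}_2$; $\mathcal{F}(\rho)=\sigma$ for pure states means $\mathcal{F}(\rho)=p\sigma$ for some $p>0$. *)

theory Defs
  imports Complex_Main "HOL-Combinatorics.Permutations" "Jordan_Normal_Form.Matrix"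
begin

text \<open>The Hilbert space H is modelled as C^d (d = dim H). Vectors and operators on
  tensor products are JNF vectors/matrices in the standard Kronecker basis
  (first factor most significant). Tensor factors of H^(m) are indexed 0..m-1.\<close>

definition kron_vec :: "complex vec \<Rightarrow> complex vec \<Rightarrow> complex vec" where
  "kron_vec u v = vec (dim_vec u * dim_vec v) (\<lambda>i. u $ (i div dim_vec v) * v $ (i mod dim_vec v))"

definition kron_mat :: "complex mat \<Rightarrow> complex mat \<Rightarrow> complex mat" where
  "kron_mat A B = mat (dim_row A * dim_row B) (dim_col A * dim_col B)
     (\<lambda>(i,j). A $$ (i div dim_row B, j div dim_col B) * B $$ (i mod dim_row B, j mod dim_col B))"

fun tensor_vecs :: "complex vec list \<Rightarrow> complex vec" where
  "tensor_vecs [] = vec 1 (\<lambda>_. 1)"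
| "tensor_vecs (v # vs) = kron_vec v (tensor_vecs vs)"

fun tensor_mats :: "complex mat list \<Rightarrow> complex mat" where
  "tensor_mats [] = mat 1 1 (\<lambda>_. 1)"
| "tensor_mats (A # As) = kron_mat A (tensor_mats As)"

definition braket :: "complex vec \<Rightarrow> complex vec \<Rightarrow> complex" where
  "braket u v = (\<Sum>i<dim_vec u. cnj (u $ i) * v $ i)"

definition unit_vector :: "nat \<Rightarrow> complex vec \<Rightarrow> bool" where
  "unit_vector N v \<longleftrightarrow> v \<in> carrier_vec N \<and> (\<Sum>i<N. (cmod (v $ i))\<^sup>2) = 1"

definition proj :: "complex vec \<Rightarrow> complex mat" where
  "proj v = mat (dim_vec v) (dim_vec v) (\<lambda>(i,j). v $ i * cnj (v $ j))"

text \<open>Digit p (0-based tensor position, most significant first) of basis index x of (C^d)^(m).\<close>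
definition digit :: "nat \<Rightarrow> nat \<Rightarrow> nat \<Rightarrow> nat \<Rightarrow> nat" where
  "digit d m x p = (x div d ^ (m - 1 - p)) mod d"

text \<open>S_g on (C^d)^(m) for a permutation g of {0..<m}: the tensor factor in position i
  is moved to position g i, i.e. S_g (v_0 \<otimes> ... \<otimes> v_(m-1)) has v_(inv g p) in position p.\<close>
definition perm_op :: "nat \<Rightarrow> nat \<Rightarrow> (nat \<Rightarrow> nat) \<Rightarrow> complex mat" where
  "perm_op d m g = mat (d ^ m) (d ^ m)
     (\<lambda>(x,y). if (\<forall>i<m. digit d m x (g i) = digit d m y i) then 1 else 0)"

definition mat_trace :: "complex mat \<Rightarrow> complex" where
  "mat_trace A = (\<Sum>i<dim_row A. A $$ (i, i))"

definition psd :: "nat \<Rightarrow> complex mat \<Rightarrow> bool" where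
  "psd N A \<longleftrightarrow> A \<in> carrier_mat N N \<and>
     (\<forall>v \<in> carrier_vec N. Im (braket v (A *\<^sub>v v)) = 0 \<and> Re (braket v (A *\<^sub>v v)) \<ge> 0)"

text \<open>Block (a,b) of size N of a matrix, and the map id_m \<otimes> Phi applied blockwise
  (auxiliary system of dimension m as first tensor factor).\<close>
definition block :: "nat \<Rightarrow> complex mat \<Rightarrow> nat \<Rightarrow> nat \<Rightarrow> complex mat" where
  "block N M a b = mat N N (\<lambda>(x,y). M $$ (a * N + x, b * N + y))"

definition ampliate :: "nat \<Rightarrow> nat \<Rightarrow> nat \<Rightarrow> (complex mat \<Rightarrow> complex mat) \<Rightarrow> complex mat \<Rightarrow> complex mat" where
  "ampliate m N1 N2 \<Phi> M = mat (m * N2) (m * N2)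
     (\<lambda>(i,j). \<Phi> (block N1 M (i div N2) (j div N2)) $$ (i mod N2, j mod N2))"

text \<open>Probabilistic quantum transformation from operators on C^N1 to operators on C^N2:
  a linear, completely positive, trace-non-increasing map.\<close>
definition quantum_operation :: "nat \<Rightarrow> nat \<Rightarrow> (complex mat \<Rightarrow> complex mat) \<Rightarrow> bool" where
  "quantum_operation N1 N2 \<Phi> \<longleftrightarrow>
     (\<forall>A \<in> carrier_mat N1 N1. \<Phi> A \<in> carrier_mat N2 N2) \<and>
     (\<forall>A \<in> carrier_mat N1 N1. \<forall>B \<in> carrier_mat N1 N1. \<forall>a b.
        \<Phi> (a \<cdot>\<^sub>m A + b \<cdot>\<^sub>m B) = a \<cdot>\<^sub>m \<Phi> A + b \<cdot>\<^sub>m \<Phi> B) \<and>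
     (\<forall>m. \<forall>M. psd (m * N1) M \<longrightarrow> psd (m * N2) (ampliate m N1 N2 \<Phi> M)) \<and>
     (\<forall>A. psd N1 A \<longrightarrow> Re (mat_trace (\<Phi> A)) \<le> Re (mat_trace A))"

text \<open>|Psi^j\<rangle> = \<otimes>_t |psi_t\<rangle>^(k_jt), k_jt = k for t \<noteq> j, k_jj = k - 1 (indices 0-based).\<close>
definition Psi_state :: "nat \<Rightarrow> nat \<Rightarrow> (nat \<Rightarrow> complex vec) \<Rightarrow> nat \<Rightarrow> complex vec" where
  "Psi_state n k \<psi> j = tensor_vecs (concat (map (\<lambda>t. replicate (if t = j then k - 1 else k) (\<psi> t)) [0..<n]))"

end

theory Submission
  imports Defs
begin


lemma sum_split: "(\<Sum>i<(m::nat)*n. f i) = (\<Sum>a<m. \<Sum>b<n. f (a*n + b)::'a::comm_monoid_add)"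
proof (induction m)
  case 0 then show ?case by simp
next
  case (Suc m)
  have "(\<Sum>i<Suc m*n. f i) = (\<Sum>i<m*n. f i) + (\<Sum>i\<in>{m*n..<m*n+n}. f i)"
    by (simp add: add.commute sum.atLeastLessThan_concat lessThan_atLeast0 flip: sum.atLeastLessThan_concat[of 0 "m*n" "m*n+n"])
  also have "(\<Sum>i\<in>{m*n..<m*n+n}. f i) = (\<Sum>b<n. f (m*n+b))"
    using sum.shift_bounds_nat_ivl[of f 0 "m*n" n] by (simp add: lessThan_atLeast0 add.commute)
  finally show ?case using Suc by simp
qed

lemma qform: assumes "v \<in> carrier_vec N" "A \<in> carrier_mat N N"
  shows "braket v (A *\<^sub>v v) = (\<Sum>i<N. \<Sum>j<N. cnj (v$i) * A$$(i,j) * v$j)"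
  using assms by (simp add: braket_def scalar_prod_def sum_distrib_left mult.assoc lessThan_atLeast0)



lemma ifz1: "(if P then a else 0) * (c::complex) = (if P then a * c else 0)" by simp
lemma ifz2: "(c::complex) * (if P then a else 0) = (if P then c * a else 0)" by simp
lemma ifz3: "cnj (if P then a else 0) = (if P then cnj a else 0)" by simp

lemma qform_vec: assumes "A \<in> carrier_mat N N"
  shows "braket (vec N f) (A *\<^sub>v vec N f) = (\<Sum>i<N. \<Sum>j<N. cnj (f i) * A$$(i,j) * f j)"
  by (subst qform[OF _ assms]) auto

lemma qform2: assumes "A \<in> carrier_mat N N" "x < N" "y < N" "x \<noteq> y"
  shows "braket (vec N (\<lambda>i. if i = x then 1 else if i = y then b else 0)) (A *\<^sub>v vec N (\<lambda>i. if i = x then 1 else if i = y then b else 0))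
   = A$$(x,x) + b * A$$(x,y) + cnj b * A$$(y,x) + cnj b * b * A$$(y,y)"
proof -
  have e: "(\<lambda>i. if i = x then 1 else if i = y then b else 0) = (\<lambda>i. (if i = x then 1 else 0) + (if i = y then b else (0::complex)))"
    using assms(4) by auto
  show ?thesis
    unfolding e qform_vec[OF assms(1)]
    apply (simp only: complex_cnj_add distrib_right distrib_left sum.distrib ifz1 ifz2 ifz3)
    using assms apply (simp add: sum.delta sum.distrib algebra_simps)
    done
qed

lemma qform1: assumes "A \<in> carrier_mat N N" "x < N"
  shows "braket (vec N (\<lambda>i. if i = x then 1 else 0)) (A *\<^sub>v vec N (\<lambda>i. if i = x then 1 else 0)) = A$$(x,x)"
  unfolding qform_vec[OF assms(1)]
  using assms by (simp only: ifz1 ifz2 ifz3 sum.delta, simp)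



lemma psd_q: assumes "psd N A" "v \<in> carrier_vec N"
  shows "Im (braket v (A *\<^sub>v v)) = 0" "Re (braket v (A *\<^sub>v v)) \<ge> 0"
  using assms unfolding psd_def by auto

lemma psd_diag: assumes "psd N A" "x < N"
  shows "Im (A$$(x,x)) = 0" "Re (A$$(x,x)) \<ge> 0"
  using psd_q[OF assms(1), of "vec N (\<lambda>i. if i = x then 1 else 0)"] qform1[of A N x] assms
  unfolding psd_def by auto

lemma psd_herm: assumes "psd N A" "x < N" "y < N"
  shows "A$$(y,x) = cnj (A$$(x,y))"
proof (cases "x = y")
  case True then show ?thesis using psd_diag[OF assms(1,2)] by (simp add: complex_eq_iff)
next
  case False
  have A: "A \<in> carrier_mat N N" using assms unfolding psd_def by auto
  have v: "\<And>b. vec N (\<lambda>i. if i = x then 1 else if i = y then b else 0) \<in> carrier_vec N" by simp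
  have 1: "Im (A$$(x,x) + 1 * A$$(x,y) + cnj 1 * A$$(y,x) + cnj 1 * 1 * A$$(y,y)) = 0"
    using psd_q[OF assms(1) v[of 1]] qform2[OF A assms(2,3) False, of 1] by simp
  have 2: "Im (A$$(x,x) + \<i> * A$$(x,y) + cnj \<i> * A$$(y,x) + cnj \<i> * \<i> * A$$(y,y)) = 0"
    using psd_q[OF assms(1) v[of \<i>]] unfolding qform2[OF A assms(2,3) False, of \<i>] by simp
  show ?thesis using 1 2 psd_diag[OF assms(1,2)] psd_diag[OF assms(1,3)]
    by (simp add: complex_eq_iff)
qed

lemma psd_offdiag: assumes "psd N A" "x < N" "y < N" "x \<noteq> y"
  shows "2 * cmod (A$$(x,y)) \<le> Re (A$$(x,x)) + Re (A$$(y,y))"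
proof (cases "A$$(x,y) = 0")
  case True then show ?thesis using psd_diag[OF assms(1,2)] psd_diag[OF assms(1,3)] by simp
next
  case False
  define a where "a = A$$(x,y)"
  define b where "b = - cnj a / complex_of_real (cmod a)"
  have A: "A \<in> carrier_mat N N" using assms unfolding psd_def by auto
  have v: "vec N (\<lambda>i. if i = x then 1 else if i = y then b else 0) \<in> carrier_vec N" by simp
  have q: "Re (A$$(x,x) + b * A$$(x,y) + cnj b * A$$(y,x) + cnj b * b * A$$(y,y)) \<ge> 0"
    using psd_q[OF assms(1) v] unfolding qform2[OF A assms(2,3,4), of b] by simp
  have h: "A$$(y,x) = cnj a" using psd_herm[OF assms(1-3)] a_def by simp
  have na: "cmod a > 0" using False a_def by simp
  have ca: "cnj a * a = complex_of_real (cmod a) ^ 2" by (simp add: complex_norm_square[symmetric] mult.commute)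
  have nz: "complex_of_real (cmod a) \<noteq> 0" using na by simp
  have ba: "b * a = - complex_of_real (cmod a)"
    unfolding b_def using nz ca by (simp add: power2_eq_square)
  have bb: "cnj b * b = 1"
    unfolding b_def using nz ca by (simp add: power2_eq_square mult.commute)
  have cba: "cnj b * cnj a = - complex_of_real (cmod a)"
    using ba by (metis complex_cnj_cnj complex_cnj_complex_of_real complex_cnj_minus complex_cnj_mult)
  show ?thesis using q unfolding h a_def[symmetric] ba bb cba by simp
qed

lemma psd_trace_ge: assumes "psd N A" "S \<subseteq> {..<N}"
  shows "(\<Sum>i\<in>S. Re (A$$(i,i))) \<le> Re (mat_trace A)"
proof -
  have A: "A \<in> carrier_mat N N" using assms unfolding psd_def by auto
  have "(\<Sum>i\<in>S. Re (A$$(i,i))) \<le> (\<Sum>i<N. Re (A$$(i,i)))"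
    by (rule sum_mono2) (use assms psd_diag in auto)
  also have "\<dots> = Re (mat_trace A)" using A by (simp add: mat_trace_def)
  finally show ?thesis .
qed

lemma psd_entry_bound: assumes "psd N A" "x < N" "y < N"
  shows "cmod (A$$(x,y)) \<le> Re (mat_trace A)"
proof (cases "x = y")
  case True
  have "cmod (A$$(x,x)) = Re (A$$(x,x))" using psd_diag[OF assms(1,2)] by (simp add: cmod_eq_Re)
  also have "\<dots> \<le> Re (mat_trace A)" using psd_trace_ge[OF assms(1), of "{x}"] assms by simp
  finally show ?thesis using True by simp
next
  case False
  have "Re (A$$(x,x)) + Re (A$$(y,y)) \<le> Re (mat_trace A)" using psd_trace_ge[OF assms(1), of "{x,y}"] assms False by simp
  moreover have "Re (A$$(x,x)) \<ge> 0" "Re (A$$(y,y)) \<ge> 0" using psd_diag assms by auto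
  ultimately show ?thesis using psd_offdiag[OF assms False] by linarith
qed

lemma psd_trace_nonneg: assumes "psd N A" shows "Re (mat_trace A) \<ge> 0"
  using psd_trace_ge[OF assms, of "{}"] by simp



definition FK :: "nat \<Rightarrow> nat \<Rightarrow> (nat \<Rightarrow> nat \<Rightarrow> complex) \<Rightarrow> complex mat \<Rightarrow> complex mat" where
  "FK N1 N2 K A = mat N2 N2 (\<lambda>(r,s). \<Sum>x<N1. \<Sum>y<N1. K r x * A$$(x,y) * cnj (K s y))"

lemma FK_carrier: "FK N1 N2 K A \<in> carrier_mat N2 N2" by (simp add: FK_def)

lemma FK_lin: assumes "A \<in> carrier_mat N1 N1" "B \<in> carrier_mat N1 N1"
  shows "FK N1 N2 K (a \<cdot>\<^sub>m A + b \<cdot>\<^sub>m B) = a \<cdot>\<^sub>m FK N1 N2 K A + b \<cdot>\<^sub>m FK N1 N2 K B"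
proof (rule eq_matI)
  fix i j assume ij: "i < dim_row (a \<cdot>\<^sub>m FK N1 N2 K A + b \<cdot>\<^sub>m FK N1 N2 K B)" "j < dim_col (a \<cdot>\<^sub>m FK N1 N2 K A + b \<cdot>\<^sub>m FK N1 N2 K B)"
  have "(\<Sum>x<N1. \<Sum>y<N1. K i x * (a \<cdot>\<^sub>m A + b \<cdot>\<^sub>m B)$$(x,y) * cnj (K j y))
     = (\<Sum>x<N1. \<Sum>y<N1. a * (K i x * A$$(x,y) * cnj (K j y)) + b * (K i x * B$$(x,y) * cnj (K j y)))"
    using assms by (intro sum.cong refl) (auto simp: algebra_simps)
  then show "FK N1 N2 K (a \<cdot>\<^sub>m A + b \<cdot>\<^sub>m B) $$ (i, j) = (a \<cdot>\<^sub>m FK N1 N2 K A + b \<cdot>\<^sub>m FK N1 N2 K B) $$ (i, j)"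
    using ij by (simp add: FK_def sum.distrib sum_distrib_left)
qed (auto simp: FK_def)

lemma FK_trace: assumes "psd N1 A" "(\<Sum>r<N2. (\<Sum>x<N1. cmod (K r x))^2) \<le> 1"
  shows "Re (mat_trace (FK N1 N2 K A)) \<le> Re (mat_trace A)"
proof -
  let ?t = "Re (mat_trace A)"
  have t0: "?t \<ge> 0" using psd_trace_nonneg[OF assms(1)] .
  have "Re (mat_trace (FK N1 N2 K A)) = (\<Sum>r<N2. Re (\<Sum>x<N1. \<Sum>y<N1. K r x * A$$(x,y) * cnj (K r y)))"
    by (simp add: mat_trace_def FK_def)
  also have "\<dots> \<le> (\<Sum>r<N2. \<Sum>x<N1. \<Sum>y<N1. cmod (K r x) * cmod (K r y) * ?t)"
  proof (rule sum_mono)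
    fix r assume "r \<in> {..<N2}"
    have "Re (\<Sum>x<N1. \<Sum>y<N1. K r x * A$$(x,y) * cnj (K r y)) \<le> cmod (\<Sum>x<N1. \<Sum>y<N1. K r x * A$$(x,y) * cnj (K r y))"
      by (rule complex_Re_le_cmod)
    also have "\<dots> \<le> (\<Sum>x<N1. cmod (\<Sum>y<N1. K r x * A$$(x,y) * cnj (K r y)))" by (rule norm_sum)
    also have "\<dots> \<le> (\<Sum>x<N1. \<Sum>y<N1. cmod (K r x * A$$(x,y) * cnj (K r y)))"
      by (intro sum_mono norm_sum)
    also have "\<dots> \<le> (\<Sum>x<N1. \<Sum>y<N1. cmod (K r x) * cmod (K r y) * ?t)"
    proof (intro sum_mono)
      fix x y assume "x \<in> {..<N1}" "y \<in> {..<N1}"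
      then have "cmod (A$$(x,y)) \<le> ?t" using psd_entry_bound[OF assms(1)] by auto
      then show "cmod (K r x * A$$(x,y) * cnj (K r y)) \<le> cmod (K r x) * cmod (K r y) * ?t"
      proof -
        assume h: "cmod (A$$(x,y)) \<le> ?t"
        have "cmod (K r x) * cmod (K r y) * cmod (A$$(x,y)) \<le> cmod (K r x) * cmod (K r y) * ?t"
          by (rule mult_left_mono[OF h]) simp
        then show ?thesis by (simp add: norm_mult mult.commute mult.left_commute)
      qed
    qed
    finally show "Re (\<Sum>x<N1. \<Sum>y<N1. K r x * A$$(x,y) * cnj (K r y)) \<le> (\<Sum>x<N1. \<Sum>y<N1. cmod (K r x) * cmod (K r y) * ?t)" .
  qed
  also have "\<dots> = (\<Sum>r<N2. (\<Sum>x<N1. cmod (K r x))^2) * ?t"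
    by (simp add: power2_eq_square sum_distrib_left sum_distrib_right mult.commute mult.left_commute)
  also have "\<dots> \<le> 1 * ?t" by (rule mult_right_mono[OF assms(2) t0])
  finally show ?thesis by simp
qed



lemma idx_lt: "a < (m::nat) \<Longrightarrow> r < N \<Longrightarrow> a*N+r < m*N"
proof -
  assume "a < m" "r < N"
  then have "a*N + r < a*N + N" by simp
  also have "\<dots> = Suc a * N" by simp
  also have "\<dots> \<le> m * N" using \<open>a < m\<close> by (intro mult_right_mono) auto
  finally show ?thesis .
qed

lemma amp_entry: assumes "i < m * N2" "j < m * N2"
  shows "ampliate m N1 N2 (FK N1 N2 K) M $$ (i,j) =
    (\<Sum>x<N1. \<Sum>y<N1. K (i mod N2) x * M$$((i div N2)*N1 + x, (j div N2)*N1 + y) * cnj (K (j mod N2) y))"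
proof -
  have "N2 > 0" using assms by (cases N2) auto
  then show ?thesis using assms by (simp add: ampliate_def FK_def block_def)
qed

lemma sum6: "(\<Sum>a<m. \<Sum>r<N2. \<Sum>b<m. \<Sum>s<N2. cnj (v (a*N2+r)) * (\<Sum>x<N1. \<Sum>y<N1. K r x * M (a*N1+x) (b*N1+y) * cnj (K s y)) * v (b*N2+s))
  = (\<Sum>a<m. \<Sum>x<N1. \<Sum>b<m. \<Sum>y<N1. cnj (\<Sum>r<N2. cnj (K r x) * v (a*N2+r)) * M (a*N1+x) (b*N1+y) * (\<Sum>s<N2. cnj (K s y) * v (b*N2+s)))"
proof -
  define T where "T a b r s x y = cnj (v (a*N2+r)) * K r x * M (a*N1+x) (b*N1+y) * cnj (K s y) * v (b*N2+s)" for a b r s x y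
  have L: "(\<Sum>a<m. \<Sum>r<N2. \<Sum>b<m. \<Sum>s<N2. cnj (v (a*N2+r)) * (\<Sum>x<N1. \<Sum>y<N1. K r x * M (a*N1+x) (b*N1+y) * cnj (K s y)) * v (b*N2+s))
     = (\<Sum>a<m. \<Sum>r<N2. \<Sum>b<m. \<Sum>s<N2. \<Sum>x<N1. \<Sum>y<N1. T a b r s x y)"
    by (simp add: T_def sum_distrib_left sum_distrib_right mult.assoc)
  have R: "(\<Sum>a<m. \<Sum>x<N1. \<Sum>b<m. \<Sum>y<N1. cnj (\<Sum>r<N2. cnj (K r x) * v (a*N2+r)) * M (a*N1+x) (b*N1+y) * (\<Sum>s<N2. cnj (K s y) * v (b*N2+s)))
     = (\<Sum>a<m. \<Sum>x<N1. \<Sum>b<m. \<Sum>y<N1. \<Sum>r<N2. \<Sum>s<N2. T a b r s x y)"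
    by (simp add: T_def sum_distrib_left sum_distrib_right mult.assoc mult.commute mult.left_commute)
  have inner: "(\<Sum>r<N2. \<Sum>s<N2. \<Sum>x<N1. \<Sum>y<N1. T a b r s x y) = (\<Sum>x<N1. \<Sum>y<N1. \<Sum>r<N2. \<Sum>s<N2. T a b r s x y)" for a b
  proof -
    have "(\<Sum>r<N2. \<Sum>s<N2. \<Sum>x<N1. \<Sum>y<N1. T a b r s x y) = (\<Sum>r<N2. \<Sum>x<N1. \<Sum>s<N2. \<Sum>y<N1. T a b r s x y)"
      by (rule sum.cong[OF refl], rule sum.swap)
    also have "\<dots> = (\<Sum>x<N1. \<Sum>r<N2. \<Sum>s<N2. \<Sum>y<N1. T a b r s x y)" by (rule sum.swap)
    also have "\<dots> = (\<Sum>x<N1. \<Sum>r<N2. \<Sum>y<N1. \<Sum>s<N2. T a b r s x y)"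
      by (rule sum.cong[OF refl], rule sum.cong[OF refl], rule sum.swap)
    also have "\<dots> = (\<Sum>x<N1. \<Sum>y<N1. \<Sum>r<N2. \<Sum>s<N2. T a b r s x y)"
      by (rule sum.cong[OF refl], rule sum.swap)
    finally show "(\<Sum>r<N2. \<Sum>s<N2. \<Sum>x<N1. \<Sum>y<N1. T a b r s x y) = (\<Sum>x<N1. \<Sum>y<N1. \<Sum>r<N2. \<Sum>s<N2. T a b r s x y)" .
  qed
  have "(\<Sum>a<m. \<Sum>r<N2. \<Sum>b<m. \<Sum>s<N2. \<Sum>x<N1. \<Sum>y<N1. T a b r s x y)
      = (\<Sum>a<m. \<Sum>b<m. \<Sum>r<N2. \<Sum>s<N2. \<Sum>x<N1. \<Sum>y<N1. T a b r s x y)"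
    by (rule sum.cong[OF refl], rule sum.swap)
  also have "\<dots> = (\<Sum>a<m. \<Sum>b<m. \<Sum>x<N1. \<Sum>y<N1. \<Sum>r<N2. \<Sum>s<N2. T a b r s x y)"
    by (simp only: inner)
  also have "\<dots> = (\<Sum>a<m. \<Sum>x<N1. \<Sum>b<m. \<Sum>y<N1. \<Sum>r<N2. \<Sum>s<N2. T a b r s x y)"
    by (rule sum.cong[OF refl], rule sum.swap)
  finally show ?thesis using L R by simp
qed

lemma FK_cp: assumes "psd (m * N1) M"
  shows "psd (m * N2) (ampliate m N1 N2 (FK N1 N2 K) M)"
  unfolding psd_def
proof (intro conjI ballI)
  show C: "ampliate m N1 N2 (FK N1 N2 K) M \<in> carrier_mat (m * N2) (m * N2)" by (simp add: ampliate_def)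
  fix v :: "complex vec" assume v: "v \<in> carrier_vec (m * N2)"
  define w where "w = vec (m*N1) (\<lambda>l. \<Sum>r<N2. cnj (K r (l mod N1)) * v$((l div N1)*N2 + r))"
  have w: "w \<in> carrier_vec (m*N1)" by (simp add: w_def)
  have MC: "M \<in> carrier_mat (m*N1) (m*N1)" using assms unfolding psd_def by auto
  have eq: "braket v (ampliate m N1 N2 (FK N1 N2 K) M *\<^sub>v v) = braket w (M *\<^sub>v w)"
  proof -
    have "braket v (ampliate m N1 N2 (FK N1 N2 K) M *\<^sub>v v)
       = (\<Sum>i<m*N2. \<Sum>j<m*N2. cnj (v$i) * ampliate m N1 N2 (FK N1 N2 K) M $$ (i,j) * v$j)"
      by (rule qform[OF v C])
    also have "\<dots> = (\<Sum>a<m. \<Sum>r<N2. \<Sum>b<m. \<Sum>s<N2. cnj (v$(a*N2+r)) * (\<Sum>x<N1. \<Sum>y<N1. K r x * M$$(a*N1+x, b*N1+y) * cnj (K s y)) * v$(b*N2+s))"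
      unfolding sum_split
    proof (intro sum.cong refl)
      fix a r b s assume "a \<in> {..<m}" "r \<in> {..<N2}" "b \<in> {..<m}" "s \<in> {..<N2}"
      then have lt: "a*N2+r < m*N2" "b*N2+s < m*N2" "r < N2" "s < N2"
        by (auto intro: idx_lt)
      show "cnj (v$(a*N2+r)) * ampliate m N1 N2 (FK N1 N2 K) M $$ (a*N2+r, b*N2+s) * v$(b*N2+s)
         = cnj (v$(a*N2+r)) * (\<Sum>x<N1. \<Sum>y<N1. K r x * M$$(a*N1+x, b*N1+y) * cnj (K s y)) * v$(b*N2+s)"
        using lt by (simp add: amp_entry)
    qed
    also have "\<dots> = (\<Sum>a<m. \<Sum>x<N1. \<Sum>b<m. \<Sum>y<N1. cnj (\<Sum>r<N2. cnj (K r x) * v$(a*N2+r)) * M$$(a*N1+x, b*N1+y) * (\<Sum>s<N2. cnj (K s y) * v$(b*N2+s)))"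
      by (rule sum6)
    also have "\<dots> = (\<Sum>i<m*N1. \<Sum>j<m*N1. cnj (w$i) * M$$(i,j) * w$j)"
      unfolding sum_split
    proof (intro sum.cong refl)
      fix a x b y assume "a \<in> {..<m}" "x \<in> {..<N1}" "b \<in> {..<m}" "y \<in> {..<N1}"
      then have lt: "a*N1+x < m*N1" "b*N1+y < m*N1" "x < N1" "y < N1"
        by (auto intro: idx_lt)
      show "cnj (\<Sum>r<N2. cnj (K r x) * v$(a*N2+r)) * M$$(a*N1+x, b*N1+y) * (\<Sum>s<N2. cnj (K s y) * v$(b*N2+s))
          = cnj (w$(a*N1+x)) * M$$(a*N1+x, b*N1+y) * w$(b*N1+y)"
        using lt by (simp add: w_def)
    qed
    also have "\<dots> = braket w (M *\<^sub>v w)" by (rule qform[OF w MC, symmetric])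
    finally show ?thesis .
  qed
  show "Im (braket v (ampliate m N1 N2 (FK N1 N2 K) M *\<^sub>v v)) = 0"
    unfolding eq using psd_q[OF assms w] by simp
  show "0 \<le> Re (braket v (ampliate m N1 N2 (FK N1 N2 K) M *\<^sub>v v))"
    unfolding eq using psd_q[OF assms w] by simp
qed

lemma FK_qo: assumes "(\<Sum>r<N2. (\<Sum>x<N1. cmod (K r x))^2) \<le> 1"
  shows "quantum_operation N1 N2 (FK N1 N2 K)"
  unfolding quantum_operation_def using FK_carrier FK_lin FK_cp FK_trace[OF _ assms] by blast



lemma dim_tensor: "(\<forall>v\<in>set L. dim_vec v = d) \<Longrightarrow> dim_vec (tensor_vecs L) = d ^ length L"
  by (induction L) (auto simp: kron_vec_def)

lemma dim_tensor': "dim_vec (tensor_vecs L) = prod_list (map dim_vec L)"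
  by (induction L) (auto simp: kron_vec_def)

lemma divh: "0 < (b::nat) \<Longrightarrow> (b * q + r mod b) div b = q"
proof -
  assume b: "0 < b"
  have "(r mod b + b * q) div b = r mod b div b + q" using b by (subst div_mult_self2) auto
  then show ?thesis by (simp add: add.commute)
qed

lemma tv_app: "i < dim_vec (tensor_vecs A) * dim_vec (tensor_vecs B) \<Longrightarrow>
  tensor_vecs (A @ B) $ i = tensor_vecs A $ (i div dim_vec (tensor_vecs B)) * tensor_vecs B $ (i mod dim_vec (tensor_vecs B))"
proof (induction A arbitrary: i)
  case Nil then show ?case by simp
next
  case (Cons a A)
  let ?dA = "dim_vec (tensor_vecs A)" and ?dB = "dim_vec (tensor_vecs B)"
  have dAB: "dim_vec (tensor_vecs (A @ B)) = ?dA * ?dB" by (simp add: dim_tensor')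
  have i: "i < dim_vec a * (?dA * ?dB)" using Cons.prems by (simp add: kron_vec_def mult.assoc)
  then have pos: "?dA * ?dB > 0" by (cases "?dA * ?dB") auto
  have im: "i mod (?dA * ?dB) < ?dA * ?dB" using pos by simp
  have "tensor_vecs ((a # A) @ B) $ i = a $ (i div (?dA * ?dB)) * tensor_vecs (A @ B) $ (i mod (?dA * ?dB))"
    using i by (simp add: kron_vec_def dAB)
  also have "\<dots> = a $ (i div (?dA * ?dB)) * (tensor_vecs A $ (i mod (?dA * ?dB) div ?dB) * tensor_vecs B $ (i mod (?dA * ?dB) mod ?dB))"
    using Cons.IH[OF im] by simp
  also have "i mod (?dA * ?dB) mod ?dB = i mod ?dB" by (simp add: mod_mod_cancel)
  also have "i mod (?dA * ?dB) div ?dB = (i div ?dB) mod ?dA"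
  proof -
    have "i mod (?dB * ?dA) = ?dB * ((i div ?dB) mod ?dA) + i mod ?dB" by (rule mod_mult2_eq)
    moreover have "?dB > 0" using pos by simp
    ultimately show ?thesis using divh[of "?dB" "i div ?dB mod ?dA" i] by (metis mult.commute)
  qed
  also have "tensor_vecs (a # A) $ (i div ?dB) = a $ (i div ?dB div ?dA) * tensor_vecs A $ (i div ?dB mod ?dA)"
  proof -
    have "i div ?dB < dim_vec a * ?dA" using i pos by (simp add: div_less_iff_less_mult mult.assoc)
    then show ?thesis by (simp add: kron_vec_def)
  qed
  moreover have "i div (?dA * ?dB) = i div ?dB div ?dA" by (metis div_mult2_eq mult.commute)
  ultimately show ?case by (simp add: mult.commute mult.assoc)
qed

lemma kron_proj: "kron_mat (proj a) (proj b) = proj (kron_vec a b)"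
proof (rule eq_matI)
  fix i j assume "i < dim_row (proj (kron_vec a b))" "j < dim_col (proj (kron_vec a b))"
  then have ij: "i < dim_vec a * dim_vec b" "j < dim_vec a * dim_vec b" by (auto simp: proj_def kron_vec_def)
  then have pos: "dim_vec b > 0" by (cases "dim_vec b") auto
  have "i div dim_vec b < dim_vec a" "j div dim_vec b < dim_vec a" using ij by (auto simp: less_mult_imp_div_less)
  moreover have "i mod dim_vec b < dim_vec b" "j mod dim_vec b < dim_vec b" using pos by auto
  ultimately show "kron_mat (proj a) (proj b) $$ (i, j) = proj (kron_vec a b) $$ (i, j)"
    using ij by (simp add: kron_mat_def proj_def kron_vec_def)
qed (auto simp: kron_mat_def proj_def kron_vec_def)

lemma tensor_proj: "tensor_mats (map proj L) = proj (tensor_vecs L)"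
proof (induction L)
  case Nil then show ?case by (auto simp: proj_def intro!: eq_matI)
next
  case (Cons a L) then show ?case by (simp add: kron_proj)
qed



lemma FK_proj: assumes "dim_vec u = N1"
  shows "FK N1 N2 K (proj u) = proj (vec N2 (\<lambda>r. \<Sum>x<N1. K r x * u$x))"
proof (rule eq_matI)
  fix i j assume "i < dim_row (proj (vec N2 (\<lambda>r. \<Sum>x<N1. K r x * u$x)))" "j < dim_col (proj (vec N2 (\<lambda>r. \<Sum>x<N1. K r x * u$x)))"
  then have ij: "i < N2" "j < N2" by (auto simp: proj_def)
  have "(\<Sum>x<N1. \<Sum>y<N1. K i x * proj u $$ (x,y) * cnj (K j y)) = (\<Sum>x<N1. \<Sum>y<N1. (K i x * u$x) * cnj (K j y * u$y))"
    using assms by (intro sum.cong refl) (auto simp: proj_def)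
  also have "\<dots> = (\<Sum>x<N1. K i x * u$x) * cnj (\<Sum>y<N1. K j y * u$y)"
    by (simp add: sum_product cnj_sum)
  finally show "FK N1 N2 K (proj u) $$ (i, j) = proj (vec N2 (\<lambda>r. \<Sum>x<N1. K r x * u$x)) $$ (i, j)"
    using ij by (simp add: FK_def proj_def)
qed (auto simp: FK_def proj_def)

lemma proj_smult: "proj (c \<cdot>\<^sub>v v) = (c * cnj c) \<cdot>\<^sub>m proj v"
  by (rule eq_matI) (auto simp: proj_def)

lemma key:
  assumes dA: "\<forall>v\<in>set A. dim_vec v = d" and dB: "\<forall>v\<in>set B. dim_vec v = d" and dp: "dim_vec p = d"
    and d: "d > 0" and r: "r < d"
  shows "(\<Sum>x< d^length A * (d * d^length B). (if x mod (d * d^length B) div d^length B = r then w (x div (d * d^length B) * d^length B + x mod d^length B) else 0) * tensor_vecs (A @ p # B) $ x)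
       = p$r * (\<Sum>x< d^length A * d^length B. w x * tensor_vecs (A @ B) $ x)"
proof -
  define a where "a = d^length A"
  define b where "b = d^length B"
  have b0: "b > 0" using d by (simp add: b_def)
  have tA: "dim_vec (tensor_vecs A) = a" using dA by (simp add: dim_tensor a_def)
  have tB: "dim_vec (tensor_vecs B) = b" using dB by (simp add: dim_tensor b_def)
  have tpB: "dim_vec (tensor_vecs (p # B)) = d * b" using tB dp by (simp add: kron_vec_def)
  define f where "f x = (if x mod (d * b) div b = r then w (x div (d * b) * b + x mod b) else 0) * tensor_vecs (A @ p # B) $ x" for x
  have "(\<Sum>x< a * (d * b). f x) = (\<Sum>q<a. \<Sum>r'<d. \<Sum>t<b. f (q*(d*b) + (r'*b+t)))"
    by (simp add: sum_split)
  also have "\<dots> = (\<Sum>q<a. \<Sum>r'<d. \<Sum>t<b. if r' = r then p$r * (w (q*b+t) * tensor_vecs (A @ B) $ (q*b+t)) else 0)"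
  proof (intro sum.cong refl)
    fix q r' t assume q: "q \<in> {..<a}" and r': "r' \<in> {..<d}" and t: "t \<in> {..<b}"
    have i1: "r'*b+t < d*b" using r' t by (auto intro: idx_lt)
    have i2: "q*(d*b) + (r'*b+t) < a*(d*b)" using q i1 by (auto intro: idx_lt)
    have i3: "q*b+t < a*b" using q t by (auto intro: idx_lt)
    have m1: "(q*(d*b) + (r'*b+t)) mod (d*b) = r'*b+t" using i1 by simp
    have m2: "(q*(d*b) + (r'*b+t)) div (d*b) = q"
    proof -
      have nz: "d*b \<noteq> 0" using d b0 by auto
      have "(r'*b+t + q*(d*b)) div (d*b) = q + (r'*b+t) div (d*b)" using nz by (rule div_mult_self1)
      then show ?thesis using i1 by (simp add: add.commute)
    qed
    have e: "q*(d*b) + (r'*b+t) = (q*d + r')*b + t" by (simp add: algebra_simps)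
    have m3: "(q*(d*b) + (r'*b+t)) mod b = t" unfolding e using t by simp
    have m4: "(r'*b+t) div b = r'" "(r'*b+t) mod b = t" using t by auto
    have T1: "tensor_vecs (A @ p # B) $ (q*(d*b) + (r'*b+t)) = tensor_vecs A $ q * tensor_vecs (p # B) $ (r'*b+t)"
      using tv_app[of "q*(d*b) + (r'*b+t)" A "p # B"] i2 tA tpB m1 m2 by simp
    have T2: "tensor_vecs (p # B) $ (r'*b+t) = p $ r' * tensor_vecs B $ t"
      using i1 m4 tB dp by (simp add: kron_vec_def)
    have T3: "tensor_vecs (A @ B) $ (q*b+t) = tensor_vecs A $ q * tensor_vecs B $ t"
      using tv_app[of "q*b+t" A B] i3 tA tB t by simp
    show "f (q*(d*b) + (r'*b+t)) = (if r' = r then p$r * (w (q*b+t) * tensor_vecs (A @ B) $ (q*b+t)) else 0)"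
      unfolding f_def m1 m2 m3 m4 T1 T2 T3 by simp
  qed
  also have "\<dots> = (\<Sum>q<a. \<Sum>t<b. p$r * (w (q*b+t) * tensor_vecs (A @ B) $ (q*b+t)))"
  proof (rule sum.cong[OF refl])
    fix q
    have "(\<Sum>r'<d. \<Sum>t<b. if r' = r then p$r * (w (q*b+t) * tensor_vecs (A @ B) $ (q*b+t)) else 0)
       = (\<Sum>r'<d. if r' = r then (\<Sum>t<b. p$r * (w (q*b+t) * tensor_vecs (A @ B) $ (q*b+t))) else 0)"
      by (rule sum.cong) auto
    then show "(\<Sum>r'<d. \<Sum>t<b. if r' = r then p$r * (w (q*b+t) * tensor_vecs (A @ B) $ (q*b+t)) else 0)
       = (\<Sum>t<b. p$r * (w (q*b+t) * tensor_vecs (A @ B) $ (q*b+t)))" using r by simp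
  qed
  also have "\<dots> = p$r * (\<Sum>x< a * b. w x * tensor_vecs (A @ B) $ x)"
    by (simp add: sum_split sum_distrib_left)
  finally show ?thesis unfolding f_def a_def b_def .
qed



lemma len_cr: "length (concat (map (\<lambda>i. replicate k (f i)) xs)) = k * length xs"
  by (induction xs) auto

lemma upt_split3: "j < n \<Longrightarrow> [0..<n] = [0..<j] @ j # [Suc j..<n]"
proof -
  assume j: "j < n"
  have "[0..<n] = [0..<j+(n-j)]" using j by simp
  also have "\<dots> = [0..<j] @ [j..<j+(n-j)]" by (rule upt_add_eq_append) simp
  also have "[j..<j+(n-j)] = j # [Suc j..<n]" using j by (simp add: upt_conv_Cons)
  finally show ?thesis .
qed

lemma LD1: assumes "j < n" "k \<ge> 1"
  shows "concat (map (\<lambda>i. replicate k (\<psi> i)) [0..<n]) =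
    concat (map (\<lambda>i. replicate k (\<psi> i)) [0..<j]) @ \<psi> j # (replicate (k-1) (\<psi> j) @ concat (map (\<lambda>i. replicate k (\<psi> i)) [Suc j..<n]))"
proof -
  have "replicate k (\<psi> j) = \<psi> j # replicate (k-1) (\<psi> j)" using assms(2) by (cases k) auto
  then show ?thesis using upt_split3[OF assms(1)] by simp
qed

lemma LD2: assumes "j < n"
  shows "concat (map (\<lambda>t. replicate (if t = j then k - 1 else k) (\<psi> t)) [0..<n]) =
    concat (map (\<lambda>i. replicate k (\<psi> i)) [0..<j]) @ (replicate (k-1) (\<psi> j) @ concat (map (\<lambda>i. replicate k (\<psi> i)) [Suc j..<n]))"
proof -
  have 1: "map (\<lambda>t. replicate (if t = j then k - 1 else k) (\<psi> t)) [0..<j] = map (\<lambda>i. replicate k (\<psi> i)) [0..<j]"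
    by (rule map_cong) auto
  have 2: "map (\<lambda>t. replicate (if t = j then k - 1 else k) (\<psi> t)) [Suc j..<n] = map (\<lambda>i. replicate k (\<psi> i)) [Suc j..<n]"
    by (rule map_cong) auto
  show ?thesis using upt_split3[OF assms(1)] by (simp only: map_append concat_append list.map 1 2, simp)
qed



lemma smm: "a \<cdot>\<^sub>m (b \<cdot>\<^sub>m A) = (a * b :: complex) \<cdot>\<^sub>m A"
  by (rule eq_matI) auto

theorem corollary4:
  fixes d n k :: nat and X :: "complex vec" and \<tau> :: "nat \<Rightarrow> nat \<Rightarrow> nat" and c :: "nat \<Rightarrow> real"
  assumes "d \<ge> 2" and "n \<ge> 2" and "k \<ge> 1"
    and "unit_vector (d ^ (n * k - 1)) X"
    and "\<forall>j<n. \<tau> j permutes {0..<n * k - 1}"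
    and "\<forall>j<n. c j > 0"
  shows "\<exists>F. quantum_operation (n * d ^ (n * k)) d F \<and>
    (\<forall>(\<mu> :: complex vec) (\<psi> :: nat \<Rightarrow> complex vec).
       unit_vector n \<mu> \<longrightarrow> (\<forall>t<n. unit_vector d (\<psi> t)) \<longrightarrow>
       (\<forall>j<n. (cmod (braket X (perm_op d (n * k - 1) (\<tau> j) *\<^sub>v Psi_state n k \<psi> j)))\<^sup>2 = c j) \<longrightarrow>
       (let z = (\<lambda>j. braket X (perm_op d (n * k - 1) (\<tau> j) *\<^sub>v Psi_state n k \<psi> j));
            s = finsum_vec TYPE(complex) d (\<lambda>j. (\<mu> $ j * (z j / complex_of_real (cmod (z j)))) \<cdot>\<^sub>v \<psi> j) {0..<n};
            \<phi> = (1 / complex_of_real (sqrt (\<Sum>i<d. (cmod (s $ i))\<^sup>2))) \<cdot>\<^sub>v s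
        in s \<noteq> 0\<^sub>v d \<longrightarrow>
           (\<exists>p > 0. F (kron_mat (proj \<mu>) (tensor_mats (concat (map (\<lambda>i. replicate k (proj (\<psi> i))) [0..<n]))))
                     = complex_of_real p \<cdot>\<^sub>m proj \<phi>)))"
proof -
  define m where "m = n*k - 1"
  define D where "D = d^(n*k)"
  define b where "b j = d^(k - 1 + k * (n - Suc j))" for j :: nat
  define w where "w j x' = (\<Sum>y<d^m. cnj (X$y) * perm_op d m (\<tau> j) $$ (y,x'))" for j x'
  define G where "G j r x = (if x mod (d * b j) div b j = r then w j (x div (d * b j) * b j + x mod b j) else 0)" for j r x
  define K0 where "K0 r i = G (i div D) r (i mod D) / complex_of_real (sqrt (c (i div D)))" for r i
  define C0 where "C0 = (\<Sum>r<d. (\<Sum>i<n*D. cmod (K0 r i))^2)"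
  define \<epsilon> where "\<epsilon> = 1 / sqrt (C0 + 1)"
  define K where "K r i = complex_of_real \<epsilon> * K0 r i" for r i
  have C0: "C0 \<ge> 0" by (simp add: C0_def sum_nonneg)
  have eps: "\<epsilon> > 0" using C0 by (simp add: \<epsilon>_def)
  have eps2: "\<epsilon>^2 = 1/(C0+1)" using C0 by (simp add: \<epsilon>_def power_divide)
  have bound: "(\<Sum>r<d. (\<Sum>i<n*D. cmod (K r i))^2) \<le> 1"
  proof -
    have "(\<Sum>r<d. (\<Sum>i<n*D. cmod (K r i))^2) = \<epsilon>^2 * C0"
      using eps by (simp add: K_def norm_mult C0_def sum_distrib_left[symmetric] power_mult_distrib)
    also have "\<dots> = C0/(C0+1)" using eps2 by simp
    also have "\<dots> \<le> 1" using C0 by simp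
    finally show ?thesis .
  qed
  have qo: "quantum_operation (n * d^(n*k)) d (FK (n*D) d K)" using FK_qo[OF bound] D_def by simp
  have d0: "d > 0" using assms(1) by simp
  have D0: "D > 0" using d0 by (simp add: D_def)
  have dimX: "dim_vec X = d^m" using assms(4) by (simp add: unit_vector_def m_def)
  show ?thesis
  proof (intro exI[of _ "FK (n*D) d K"] conjI qo allI impI)
    fix \<mu> :: "complex vec" and \<psi> :: "nat \<Rightarrow> complex vec"
    assume h\<mu>: "unit_vector n \<mu>" and h\<psi>: "\<forall>t<n. unit_vector d (\<psi> t)"
      and hc: "\<forall>j<n. (cmod (braket X (perm_op d (n * k - 1) (\<tau> j) *\<^sub>v Psi_state n k \<psi> j)))\<^sup>2 = c j"
    define z where "z j = braket X (perm_op d (n * k - 1) (\<tau> j) *\<^sub>v Psi_state n k \<psi> j)" for j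
    define s where "s = finsum_vec TYPE(complex) d (\<lambda>j. (\<mu> $ j * (z j / complex_of_real (cmod (z j)))) \<cdot>\<^sub>v \<psi> j) {0..<n}"
    define N where "N = (\<Sum>i<d. (cmod (s $ i))\<^sup>2)"
    define \<phi> where "\<phi> = (1 / complex_of_real (sqrt N)) \<cdot>\<^sub>v s"
    have main: "s \<noteq> 0\<^sub>v d \<Longrightarrow> (\<exists>p > 0. FK (n*D) d K (kron_mat (proj \<mu>) (tensor_mats (concat (map (\<lambda>i. replicate k (proj (\<psi> i))) [0..<n]))))
                     = complex_of_real p \<cdot>\<^sub>m proj \<phi>)"
    proof -
      assume snz: "s \<noteq> 0\<^sub>v d"
      have dmu: "dim_vec \<mu> = n" using h\<mu> by (simp add: unit_vector_def)
      have dpsi: "\<And>t. t < n \<Longrightarrow> dim_vec (\<psi> t) = d" using h\<psi> by (simp add: unit_vector_def)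
      define L where "L = concat (map (\<lambda>i. replicate k (\<psi> i)) [0..<n])"
      have setL: "\<forall>v\<in>set L. dim_vec v = d" using dpsi by (auto simp: L_def)
      have lenL: "length L = n * k" by (simp add: L_def len_cr mult.commute)
      have dimT: "dim_vec (tensor_vecs L) = D" using dim_tensor[OF setL] lenL by (simp add: D_def)
      define u where "u = kron_vec \<mu> (tensor_vecs L)"
      have dimu: "dim_vec u = n * D" by (simp add: u_def kron_vec_def dmu dimT)
      have inp: "kron_mat (proj \<mu>) (tensor_mats (concat (map (\<lambda>i. replicate k (proj (\<psi> i))) [0..<n]))) = proj u"
      proof -
        have "concat (map (\<lambda>i. replicate k (proj (\<psi> i))) [0..<n]) = map proj L"
          by (simp add: L_def map_concat o_def)
        then show ?thesis by (simp add: tensor_proj kron_proj u_def)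
      qed
      define Aj where "Aj j = concat (map (\<lambda>i. replicate k (\<psi> i)) [0..<j])" for j
      define Bj where "Bj j = replicate (k-1) (\<psi> j) @ concat (map (\<lambda>i. replicate k (\<psi> i)) [Suc j..<n])" for j
      have LA: "L = Aj j @ \<psi> j # Bj j" if j: "j < n" for j
        unfolding L_def Aj_def Bj_def by (rule LD1[OF j assms(3)])
      have PA: "Psi_state n k \<psi> j = tensor_vecs (Aj j @ Bj j)" if j: "j < n" for j
        unfolding Psi_state_def Aj_def Bj_def by (subst LD2[OF j]) simp
      have setA: "\<forall>v\<in>set (Aj j). dim_vec v = d" if j: "j < n" for j
using setL unfolding LA[OF j] by simp
      have setB: "\<forall>v\<in>set (Bj j). dim_vec v = d" if j: "j < n" for j
using setL unfolding LA[OF j] by simp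
      have lenAB: "length (Aj j) + length (Bj j) = m" if j: "j < n" for j
        using lenL LA[OF j] by (simp add: m_def)
      have lenB: "length (Bj j) = k - 1 + k * (n - Suc j)" for j
        by (simp add: Bj_def len_cr)
      have dPsi: "dim_vec (Psi_state n k \<psi> j) = d^m" if j: "j < n" for j
        unfolding PA[OF j] using dim_tensor[of "Aj j @ Bj j" d] setA[OF j] setB[OF j] lenAB[OF j] by (simp add: ball_Un)
      have zform: "z j = (\<Sum>x'<d^m. w j x' * Psi_state n k \<psi> j $ x')" if j: "j < n" for j
      proof -
        have "z j = (\<Sum>y<d^m. cnj (X$y) * (\<Sum>i<d^m. perm_op d m (\<tau> j) $$ (y,i) * Psi_state n k \<psi> j $ i))"
          unfolding z_def braket_def dimX m_def[symmetric]
        proof (rule sum.cong[OF refl])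
          fix y assume y: "y \<in> {..<d^m}"
          have "(perm_op d m (\<tau> j) *\<^sub>v Psi_state n k \<psi> j) $ y = (\<Sum>i<d^m. perm_op d m (\<tau> j) $$ (y,i) * Psi_state n k \<psi> j $ i)"
            using y dPsi[OF j] by (simp add: perm_op_def scalar_prod_def lessThan_atLeast0)
          then show "cnj (X$y) * (perm_op d m (\<tau> j) *\<^sub>v Psi_state n k \<psi> j) $ y = cnj (X$y) * (\<Sum>i<d^m. perm_op d m (\<tau> j) $$ (y,i) * Psi_state n k \<psi> j $ i)"
            by simp
        qed
        also have "\<dots> = (\<Sum>x'<d^m. w j x' * Psi_state n k \<psi> j $ x')"
          unfolding w_def sum_distrib_left sum_distrib_right by (subst sum.swap) (simp add: mult.assoc)
        finally show ?thesis .
      qed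
      have keyj: "(\<Sum>x<D. G j r x * tensor_vecs L $ x) = \<psi> j $ r * z j" if j: "j < n" and r: "r < d" for j r
      proof -
        have Dj: "D = d^length (Aj j) * (d * d^length (Bj j))"
        proof -
          have "n*k = length (Aj j) + Suc (length (Bj j))" using lenL LA[OF j] by simp
          then show ?thesis by (simp add: D_def power_add)
        qed
        have bj: "b j = d^length (Bj j)" by (simp add: b_def lenB)
        have m2: "d^length (Aj j) * d^length (Bj j) = d^m" using lenAB[OF j] by (simp flip: power_add)
        have "(\<Sum>x<D. G j r x * tensor_vecs L $ x) = \<psi> j $ r * (\<Sum>x< d^length (Aj j) * d^length (Bj j). w j x * tensor_vecs (Aj j @ Bj j) $ x)"
          unfolding Dj G_def bj LA[OF j] by (rule key[OF setA[OF j] setB[OF j] dpsi[OF j] d0 r])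
        also have "\<dots> = \<psi> j $ r * z j" unfolding m2 zform[OF j] PA[OF j] ..
        finally show ?thesis .
      qed
      have zc: "complex_of_real (cmod (z j)) = complex_of_real (sqrt (c j))" if j: "j < n" for j
      proof -
        have "(cmod (z j))^2 = c j" using hc j by (simp add: z_def)
        then have "sqrt (c j) = cmod (z j)" by (metis real_sqrt_abs abs_norm_cancel)
        then show ?thesis by simp
      qed
      have sr: "s $ r = (\<Sum>j<n. (\<mu> $ j * (z j / complex_of_real (sqrt (c j)))) * \<psi> j $ r)" if r: "r < d" for r
      proof -
        have "s $ r = (\<Sum>j\<in>{0..<n}. ((\<mu> $ j * (z j / complex_of_real (cmod (z j)))) \<cdot>\<^sub>v \<psi> j) $ r)"
          unfolding s_def by (rule index_finsum_vec, simp, rule r, rule Pi_I, rule carrier_vecI) (use dpsi in simp)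
        also have "\<dots> = (\<Sum>j<n. (\<mu> $ j * (z j / complex_of_real (sqrt (c j)))) * \<psi> j $ r)"
          unfolding atLeast0LessThan
        proof (rule sum.cong[OF refl])
          fix j assume "j \<in> {..<n}"
          then have j: "j < n" by simp
          show "((\<mu> $ j * (z j / complex_of_real (cmod (z j)))) \<cdot>\<^sub>v \<psi> j) $ r = (\<mu> $ j * (z j / complex_of_real (sqrt (c j)))) * \<psi> j $ r"
            using dpsi[OF j] zc[OF j] r by simp
        qed
        finally show ?thesis .
      qed
      have Ku: "(\<Sum>i<n*D. K r i * u$i) = complex_of_real \<epsilon> * s $ r" if r: "r < d" for r
      proof -
        have "(\<Sum>i<n*D. K r i * u$i) = (\<Sum>j<n. \<Sum>x<D. complex_of_real \<epsilon> * (\<mu> $ j / complex_of_real (sqrt (c j))) * (G j r x * tensor_vecs L $ x))"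
          unfolding sum_split
        proof (intro sum.cong refl)
          fix j x assume j: "j \<in> {..<n}" and x: "x \<in> {..<D}"
          have i: "j*D+x < n*D" using j x by (auto intro: idx_lt)
          have dv: "(j*D+x) div D = j" "(j*D+x) mod D = x" using x D0 by auto
          show "K r (j*D+x) * u$(j*D+x) = complex_of_real \<epsilon> * (\<mu> $ j / complex_of_real (sqrt (c j))) * (G j r x * tensor_vecs L $ x)"
            proof -
            have "u$(j*D+x) = \<mu> $ j * tensor_vecs L $ x" using i dv by (simp add: u_def kron_vec_def dmu dimT)
            moreover have "K r (j*D+x) = complex_of_real \<epsilon> * (G j r x / complex_of_real (sqrt (c j)))"
              unfolding K_def K0_def dv ..
            ultimately show ?thesis by simp
          qed
        qed
        also have "\<dots> = (\<Sum>j<n. complex_of_real \<epsilon> * (\<mu> $ j / complex_of_real (sqrt (c j))) * (\<psi> j $ r * z j))"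
          by (rule sum.cong[OF refl], subst sum_distrib_left[symmetric], simp add: keyj r)
        also have "\<dots> = complex_of_real \<epsilon> * s $ r"
          unfolding sr[OF r] by (simp add: sum_distrib_left mult.commute mult.left_commute)
        finally show ?thesis .
      qed
      have sc: "s \<in> carrier_vec d" unfolding s_def
        by (rule finsum_vec_closed, rule Pi_I, rule carrier_vecI) (use dpsi in simp)
      have dims: "dim_vec s = d" using sc by simp
      have vKu: "vec d (\<lambda>r. \<Sum>i<n*D. K r i * u$i) = complex_of_real \<epsilon> \<cdot>\<^sub>v s"
        by (rule eq_vecI) (auto simp: Ku dims)
      have Npos: "N > 0"
      proof -
        have "\<exists>i<d. s $ i \<noteq> 0"
        proof (rule ccontr)
          assume "\<not> (\<exists>i<d. s $ i \<noteq> 0)"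
          then have "s = 0\<^sub>v d" by (intro eq_vecI) (auto simp: dims)
          with snz show False by simp
        qed
        then obtain i where i: "i < d" "s $ i \<noteq> 0" by blast
        have "0 < (cmod (s $ i))^2" using i by simp
        also have "\<dots> \<le> N" unfolding N_def using i by (intro member_le_sum) auto
        finally show ?thesis .
      qed
      have cc: "(1 / complex_of_real (sqrt N)) * cnj (1 / complex_of_real (sqrt N)) = complex_of_real (1/N)"
      proof -
        have "(1 / complex_of_real (sqrt N)) * cnj (1 / complex_of_real (sqrt N)) = 1 / complex_of_real (sqrt N * sqrt N)"
          by (simp flip: of_real_mult)
        also have "sqrt N * sqrt N = N" using Npos by simp
        finally show ?thesis by simp
      qed
      have projphi: "proj \<phi> = complex_of_real (1/N) \<cdot>\<^sub>m proj s"
        unfolding \<phi>_def proj_smult cc ..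
      have "FK (n*D) d K (proj u) = proj (complex_of_real \<epsilon> \<cdot>\<^sub>v s)" by (simp add: FK_proj dimu vKu)
      also have "\<dots> = complex_of_real (\<epsilon>^2 * N) \<cdot>\<^sub>m proj \<phi>"
      proof -
        have "complex_of_real \<epsilon> * cnj (complex_of_real \<epsilon>) = complex_of_real (\<epsilon>^2 * N) * complex_of_real (1/N)"
          using Npos by (simp add: power2_eq_square)
        then show ?thesis unfolding proj_smult projphi smm by simp
      qed
      finally have fin: "FK (n*D) d K (proj u) = complex_of_real (\<epsilon>^2 * N) \<cdot>\<^sub>m proj \<phi>" .
      show ?thesis unfolding inp using fin eps Npos by (intro exI[of _ "\<epsilon>^2 * N"] conjI) simp_all
    qed
    show "let z = (\<lambda>j. braket X (perm_op d (n * k - 1) (\<tau> j) *\<^sub>v Psi_state n k \<psi> j));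
            s = finsum_vec TYPE(complex) d (\<lambda>j. (\<mu> $ j * (z j / complex_of_real (cmod (z j)))) \<cdot>\<^sub>v \<psi> j) {0..<n};
            \<phi> = (1 / complex_of_real (sqrt (\<Sum>i<d. (cmod (s $ i))\<^sup>2))) \<cdot>\<^sub>v s
        in s \<noteq> 0\<^sub>v d \<longrightarrow>
           (\<exists>p > 0. FK (n*D) d K (kron_mat (proj \<mu>) (tensor_mats (concat (map (\<lambda>i. replicate k (proj (\<psi> i))) [0..<n]))))
                     = complex_of_real p \<cdot>\<^sub>m proj \<phi>)"
      unfolding Let_def using main unfolding \<phi>_def N_def s_def z_def by blast
  qed
qed

end
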